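(* Let $X$ be an irreducible positive recurrent Markov chain on a countable state space $S$ with transition matrix $P$ and stationary distribution $\pi$. Let $K\subseteq A\subseteq S$ be finite with $K$ nonempty, $A'=A\setminus K$, $T_K=\inf\{n\ge1:X_n\in K\}$, $T=\inf\{n\ge1:X_n\notin A\}$. Let $G(x,y)=P_x(X_{T_K}=y,\,T_K<T)$ for $x,y\in K$; assume $G$ is irreducible and $I-G$ is nonsingular. For $x\in K$ define the probability $\tau_x$ on $K$ by $\tau_x(y)=(I-G)^{-1}(x,y)/\sum_{w\in K}(I-G)^{-1}(x,w)$. Let $r:S\to[0,\infty)$ and suppose there are non-negative functions $g_1,g_2$ on $K^c$ and $h_1,h_2$ on $A$ such that for all $x\in K^c$ $$\sum_{y\in K^c}P(x,y)g_1(y)\le g_1(x)-r(x),\qquad \sum_{y\in K^c}P(x,y)g_2(y)\le g_2(x)-1,$$ and for all $x\in A$ and $i=1,2$, $\sum_{y\in A^c}P(x,y)g_i(y)\le h_i(x)$. Write $h_i=(h_{i1},h_{i2})$ for its restrictions to $K$ and $A'$. For $x\in K$ and a non-negative function $w$ set $\underline\kappa(x,w)=w(x)+(P_{12}(I-P_{22})^{-1}w_2)(x)$, $\tilde\kappa_1(x,r)=\underline\kappa(x,r)+h_{11}(x)+(P_{12}(I-P_{22})^{-1}h_{12})(x)$, $\tilde\kappa_2(x,e)=\underline\kappa(x,e)+h_{21}(x)+(P_{12}(I-P_{22})^{-1}h_{22})(x)$, where $e\equiv1$, and regard these as column vectors indexed by $K$. Then $$\frac{\min_{x\in K}\tau_x\underline\kappa(r)}{\max_{x\in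 K}\tau_x\tilde\kappa_2(e)}\le \pi r\le\frac{\max_{x\in K}\tau_x\tilde\kappa_1(r)}{\min_{x\in K}\tau_x\underline\kappa(e)}.$$ Moreover, if $\pi_2$ is the stationary distribution of the row-normalized matrix $P_2(x,y)=G(x,y)/\sum_{y'\in K}G(x,y')$ and $\tilde\pi_2(r)=\pi_2\underline\kappa(r)/\pi_2\underline\kappa(e)$, then $\tilde\pi_2(r)$ lies between the same two bounds, so that $|\tilde\pi_2(r)-\pi r|$ is at most the difference of the upper and lower bounds.
   Context: $P_x$ is the law of the chain started at $x$. $P$ is written in block form with respect to $(K,A',A^c)$ as $(P_{ij})_{i,j=1}^3$; $P_{12}$ is the $K\times A'$ block, $P_{22}$ the $A'\times A'$ block, and $w_2$ denotes the restriction of $w$ to $A'$; $I-P_{22}$ is invertible in this setting. Note $\underline\kappa(x,w)=E_x\sum_{j=0}^{(T\wedge T_K)-1}w(X_j)$. For a row vector $\phi$ on $K$ and column vector $q$ on $K$, $\phi q=\sum_{x\in K}\phi(x)q(x)$; $\pi r=\sum_x\pi(x)r(x)$. *)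

theory Defs
  imports "HOL-Analysis.Analysis"
begin

definition stochastic :: "('a \<Rightarrow> 'a \<Rightarrow> real) \<Rightarrow> bool" where
  "stochastic P \<longleftrightarrow> (\<forall>x y. P x y \<ge> 0) \<and> (\<forall>x. (P x has_sum 1) UNIV)"

definition irreducible_chain :: "('a \<Rightarrow> 'a \<Rightarrow> real) \<Rightarrow> bool" where
  "irreducible_chain P \<longleftrightarrow> (\<forall>x y. (x, y) \<in> {(a, b). P a b > 0}\<^sup>*)"

text \<open>Taboo probabilities: taboo P H n x y = P_x(X_1,...,X_n \<in> H, X_(n+1) = y).\<close>
fun taboo :: "('a \<Rightarrow> 'a \<Rightarrow> real) \<Rightarrow> 'a set \<Rightarrow> nat \<Rightarrow> 'a \<Rightarrow> 'a \<Rightarrow> real" where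
  "taboo P H 0 x y = P x y"
| "taboo P H (Suc n) x y = infsum (\<lambda>z. P x z * taboo P H n z y) H"

text \<open>Positive recurrence of every state: with first-return probabilities
  f_x(n+1) = P_x(T_x = n+1) = taboo P (-{x}) n x x, we require P_x(T_x < \<infinity>) = 1
  and E_x T_x < \<infinity>.\<close>
definition positive_recurrent :: "('a \<Rightarrow> 'a \<Rightarrow> real) \<Rightarrow> bool" where
  "positive_recurrent P \<longleftrightarrow>
     (\<forall>x. (\<lambda>n. taboo P (-{x}) n x x) sums 1 \<and>
          summable (\<lambda>n. real (Suc n) * taboo P (-{x}) n x x))"

definition stationary_dist :: "('a \<Rightarrow> 'a \<Rightarrow> real) \<Rightarrow> ('a \<Rightarrow> real) \<Rightarrow> bool" where
  "stationary_dist P \<pi> \<longleftrightarrow> (\<forall>x. \<pi> x \<ge> 0) \<and> (\<pi> has_sum 1) UNIV \<and>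
     (\<forall>y. ((\<lambda>x. \<pi> x * P x y) has_sum \<pi> y) UNIV)"

text \<open>G(x,y) = P_x(X_{T_K} = y, T_K < T): sum over n of the probabilities that
  X_1..X_n lie in A' = A - K and X_(n+1) = y.\<close>
definition exit_G :: "('a \<Rightarrow> 'a \<Rightarrow> real) \<Rightarrow> 'a set \<Rightarrow> 'a set \<Rightarrow> 'a \<Rightarrow> 'a \<Rightarrow> real" where
  "exit_G P K A x y = (\<Sum>n. taboo P (A - K) n x y)"

definition idm :: "'a \<Rightarrow> 'a \<Rightarrow> real" where
  "idm x y = (if x = y then 1 else 0)"

definition is_inverse_on :: "'a set \<Rightarrow> ('a \<Rightarrow> 'a \<Rightarrow> real) \<Rightarrow> ('a \<Rightarrow> 'a \<Rightarrow> real) \<Rightarrow> bool" where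
  "is_inverse_on S M N \<longleftrightarrow>
     (\<forall>x\<in>S. \<forall>y\<in>S. (\<Sum>z\<in>S. M x z * N z y) = idm x y) \<and>
     (\<forall>x\<in>S. \<forall>y\<in>S. (\<Sum>z\<in>S. N x z * M z y) = idm x y)"

definition nonsingular_on :: "'a set \<Rightarrow> ('a \<Rightarrow> 'a \<Rightarrow> real) \<Rightarrow> bool" where
  "nonsingular_on S M \<longleftrightarrow> (\<exists>N. is_inverse_on S M N)"

definition inv_on :: "'a set \<Rightarrow> ('a \<Rightarrow> 'a \<Rightarrow> real) \<Rightarrow> 'a \<Rightarrow> 'a \<Rightarrow> real" where
  "inv_on S M = (THE N. is_inverse_on S M N \<and> (\<forall>x y. x \<notin> S \<or> y \<notin> S \<longrightarrow> N x y = 0))"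

definition irreducible_on :: "'a set \<Rightarrow> ('a \<Rightarrow> 'a \<Rightarrow> real) \<Rightarrow> bool" where
  "irreducible_on S M \<longleftrightarrow> (\<forall>x\<in>S. \<forall>y\<in>S. (x, y) \<in> {(a, b). a \<in> S \<and> b \<in> S \<and> M a b > 0}\<^sup>*)"

definition p12N :: "('a \<Rightarrow> 'a \<Rightarrow> real) \<Rightarrow> 'a set \<Rightarrow> 'a set \<Rightarrow> ('a \<Rightarrow> real) \<Rightarrow> 'a \<Rightarrow> real" where
  "p12N P K A v x =
     (\<Sum>z\<in>A - K. P x z * (\<Sum>u\<in>A - K. inv_on (A - K) (\<lambda>a b. idm a b - P a b) z u * v u))"

definition kappa_low :: "('a \<Rightarrow> 'a \<Rightarrow> real) \<Rightarrow> 'a set \<Rightarrow> 'a set \<Rightarrow> ('a \<Rightarrow> real) \<Rightarrow> 'a \<Rightarrow> real" where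
  "kappa_low P K A w x = w x + p12N P K A w x"

definition kappa_tilde :: "('a \<Rightarrow> 'a \<Rightarrow> real) \<Rightarrow> 'a set \<Rightarrow> 'a set \<Rightarrow> ('a \<Rightarrow> real) \<Rightarrow> ('a \<Rightarrow> real) \<Rightarrow> 'a \<Rightarrow> real" where
  "kappa_tilde P K A w h x = kappa_low P K A w x + h x + p12N P K A h x"

definition tau :: "('a \<Rightarrow> 'a \<Rightarrow> real) \<Rightarrow> 'a set \<Rightarrow> 'a set \<Rightarrow> 'a \<Rightarrow> 'a \<Rightarrow> real" where
  "tau P K A x y =
     (let M = inv_on K (\<lambda>a b. idm a b - exit_G P K A a b)
      in M x y / (\<Sum>w\<in>K. M x w))"

definition tau_dot :: "('a \<Rightarrow> 'a \<Rightarrow> real) \<Rightarrow> 'a set \<Rightarrow> 'a set \<Rightarrow> 'a \<Rightarrow> ('a \<Rightarrow> real) \<Rightarrow> real" where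
  "tau_dot P K A x q = (\<Sum>y\<in>K. tau P K A x y * q y)"

definition lower_bound :: "('a \<Rightarrow> 'a \<Rightarrow> real) \<Rightarrow> 'a set \<Rightarrow> 'a set \<Rightarrow> ('a \<Rightarrow> real) \<Rightarrow> ('a \<Rightarrow> real) \<Rightarrow> real" where
  "lower_bound P K A r h2 =
     Min ((\<lambda>x. tau_dot P K A x (kappa_low P K A r)) ` K) /
     Max ((\<lambda>x. tau_dot P K A x (kappa_tilde P K A (\<lambda>_. 1) h2)) ` K)"

definition upper_bound :: "('a \<Rightarrow> 'a \<Rightarrow> real) \<Rightarrow> 'a set \<Rightarrow> 'a set \<Rightarrow> ('a \<Rightarrow> real) \<Rightarrow> ('a \<Rightarrow> real) \<Rightarrow> real" where
  "upper_bound P K A r h1 =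
     Max ((\<lambda>x. tau_dot P K A x (kappa_tilde P K A r h1)) ` K) /
     Min ((\<lambda>x. tau_dot P K A x (kappa_low P K A (\<lambda>_. 1))) ` K)"

definition P2 :: "('a \<Rightarrow> 'a \<Rightarrow> real) \<Rightarrow> 'a set \<Rightarrow> 'a set \<Rightarrow> 'a \<Rightarrow> 'a \<Rightarrow> real" where
  "P2 P K A x y = exit_G P K A x y / (\<Sum>y'\<in>K. exit_G P K A x y')"

definition stationary_on :: "'a set \<Rightarrow> ('a \<Rightarrow> 'a \<Rightarrow> real) \<Rightarrow> ('a \<Rightarrow> real) \<Rightarrow> bool" where
  "stationary_on S M \<mu> \<longleftrightarrow> (\<forall>x\<in>S. \<mu> x \<ge> 0) \<and> (\<Sum>x\<in>S. \<mu> x) = 1 \<and>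
     (\<forall>y\<in>S. (\<Sum>x\<in>S. \<mu> x * M x y) = \<mu> y)"

definition pi2_tilde :: "('a \<Rightarrow> 'a \<Rightarrow> real) \<Rightarrow> 'a set \<Rightarrow> 'a set \<Rightarrow> ('a \<Rightarrow> real) \<Rightarrow> ('a \<Rightarrow> real) \<Rightarrow> real" where
  "pi2_tilde P K A \<mu> r =
     (\<Sum>x\<in>K. \<mu> x * kappa_low P K A r x) / (\<Sum>x\<in>K. \<mu> x * kappa_low P K A (\<lambda>_. 1) x)"

end

theory Submission
  imports Defs
begin


lemma sum_idm_left:
  assumes "finite S" "x \<in> S"
  shows "(\<Sum>w\<in>S. idm x w * f w) = f x"
proof -
  have "(\<Sum>w\<in>S. idm x w * f w) = (\<Sum>w\<in>S. if w = x then f x else 0)"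
    by (rule sum.cong) (auto simp: idm_def)
  also have "\<dots> = f x" using assms by (simp add: sum.delta')
  finally show ?thesis .
qed

lemma sum_idm_right:
  assumes "finite S" "y \<in> S"
  shows "(\<Sum>w\<in>S. f w * idm w y) = f y"
proof -
  have "(\<Sum>w\<in>S. f w * idm w y) = (\<Sum>w\<in>S. if w = y then f y else 0)"
    by (rule sum.cong) (auto simp: idm_def)
  also have "\<dots> = f y" using assms by (simp add: sum.delta')
  finally show ?thesis .
qed

lemma inverse_unique:
  assumes "finite S" "is_inverse_on S M N1" "is_inverse_on S M N2" "x \<in> S" "y \<in> S"
  shows "N1 x y = N2 x y"
proof -
  have "(\<Sum>w\<in>S. (\<Sum>z\<in>S. N1 x z * M z w) * N2 w y) = (\<Sum>w\<in>S. idm x w * N2 w y)"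
    using assms by (intro sum.cong) (auto simp: is_inverse_on_def)
  also have "\<dots> = N2 x y" using assms by (simp add: sum_idm_left)
  finally have 1: "(\<Sum>w\<in>S. (\<Sum>z\<in>S. N1 x z * M z w) * N2 w y) = N2 x y" .
  have "(\<Sum>w\<in>S. (\<Sum>z\<in>S. N1 x z * M z w) * N2 w y) = (\<Sum>z\<in>S. N1 x z * (\<Sum>w\<in>S. M z w * N2 w y))"
    unfolding sum_distrib_left sum_distrib_right mult.assoc by (rule sum.swap)
  also have "\<dots> = (\<Sum>z\<in>S. N1 x z * idm z y)"
    using assms by (intro sum.cong) (auto simp: is_inverse_on_def)
  also have "\<dots> = N1 x y" using assms by (simp add: sum_idm_right)
  finally show ?thesis using 1 by simp
qed

lemma inv_on_props:
  assumes "finite S" "nonsingular_on S M"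
  shows "is_inverse_on S M (inv_on S M)"
proof -
  obtain N where N: "is_inverse_on S M N" using assms unfolding nonsingular_on_def by blast
  define N0 where "N0 = (\<lambda>x y. if x \<in> S \<and> y \<in> S then N x y else 0)"
  have N0: "is_inverse_on S M N0" using N unfolding is_inverse_on_def N0_def
    by (auto intro!: sum.cong)
  have P0: "is_inverse_on S M N0 \<and> (\<forall>x y. x \<notin> S \<or> y \<notin> S \<longrightarrow> N0 x y = 0)"
    using N0 by (auto simp: N0_def)
  have "inv_on S M = N0"
    unfolding inv_on_def
  proof (rule the_equality)
    show "is_inverse_on S M N0 \<and> (\<forall>x y. x \<notin> S \<or> y \<notin> S \<longrightarrow> N0 x y = 0)" by (rule P0)
  next
    fix N' assume h: "is_inverse_on S M N' \<and> (\<forall>x y. x \<notin> S \<or> y \<notin> S \<longrightarrow> N' x y = 0)"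
    show "N' = N0"
    proof (intro ext)
      fix x y show "N' x y = N0 x y"
        using h P0 inverse_unique[OF assms(1), of M N' N0 x y] by metis
    qed
  qed
  then show ?thesis using N0 by simp
qed

lemma inv_on_eq:
  assumes "finite S" "is_inverse_on S M N" "x \<in> S" "y \<in> S"
  shows "inv_on S M x y = N x y"
  using inverse_unique[OF assms(1) inv_on_props[OF assms(1)] assms(2)] assms
  unfolding nonsingular_on_def by blast



fun qpow :: "('a \<Rightarrow> 'a \<Rightarrow> real) \<Rightarrow> 'a set \<Rightarrow> nat \<Rightarrow> 'a \<Rightarrow> 'a \<Rightarrow> real" where
  "qpow P H 0 = idm"
| "qpow P H (Suc n) = (\<lambda>x y. \<Sum>z\<in>H. P x z * qpow P H n z y)"

definition nmat :: "('a \<Rightarrow> 'a \<Rightarrow> real) \<Rightarrow> 'a set \<Rightarrow> 'a \<Rightarrow> 'a \<Rightarrow> real" where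
  "nmat P H x y = (\<Sum>n. qpow P H n x y)"

lemma idm_nonneg: "idm x y \<ge> 0" by (simp add: idm_def)

lemma qpow_nonneg:
  assumes "\<And>x y. P x y \<ge> 0"
  shows "qpow P H n x y \<ge> 0"
  using assms by (induction n arbitrary: x y) (auto simp: idm_nonneg intro!: sum_nonneg)

lemma sum_swap_mult:
  fixes a :: "'a \<Rightarrow> real" and b :: "'a \<Rightarrow> 'b \<Rightarrow> real" and c :: "'b \<Rightarrow> real"
  shows
  "(\<Sum>z\<in>H. a z * (\<Sum>w\<in>W. b z w * c w)) = (\<Sum>w\<in>W. (\<Sum>z\<in>H. a z * b z w) * c w)"
proof -
  have "(\<Sum>z\<in>H. a z * (\<Sum>w\<in>W. b z w * c w)) = (\<Sum>z\<in>H. \<Sum>w\<in>W. a z * (b z w * c w))"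
    by (simp add: sum_distrib_left)
  also have "\<dots> = (\<Sum>w\<in>W. \<Sum>z\<in>H. a z * (b z w * c w))" by (rule sum.swap)
  also have "\<dots> = (\<Sum>w\<in>W. (\<Sum>z\<in>H. a z * b z w) * c w)"
    by (simp add: sum_distrib_right mult.assoc)
  finally show ?thesis .
qed

lemma qpow_comm:
  assumes "finite H" "x \<in> H" "y \<in> H"
  shows "qpow P H (Suc n) x y = (\<Sum>z\<in>H. qpow P H n x z * P z y)"
  using assms(2)
proof (induction n arbitrary: x)
  case 0
  then show ?case using assms by (simp add: sum_idm_left sum_idm_right)
next
  case (Suc n)
  have "qpow P H (Suc (Suc n)) x y = (\<Sum>z\<in>H. P x z * qpow P H (Suc n) z y)" by simp
  also have "\<dots> = (\<Sum>z\<in>H. P x z * (\<Sum>w\<in>H. qpow P H n z w * P w y))"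
    using Suc by (intro sum.cong) auto
  also have "\<dots> = (\<Sum>w\<in>H. (\<Sum>z\<in>H. P x z * qpow P H n z w) * P w y)"
    by (rule sum_swap_mult)
  also have "\<dots> = (\<Sum>w\<in>H. qpow P H (Suc n) x w * P w y)" by simp
  finally show ?case .
qed

locale neumann =
  fixes P :: "'a \<Rightarrow> 'a \<Rightarrow> real" and H :: "'a set" and g :: "'a \<Rightarrow> real"
  assumes finH: "finite H"
    and Pnn: "\<And>x y. P x y \<ge> 0"
    and gnn: "\<And>x. x \<in> H \<Longrightarrow> g x \<ge> 0"
    and drift: "\<And>x. x \<in> H \<Longrightarrow> (\<Sum>y\<in>H. P x y * g y) \<le> g x - 1"
begin

lemma qnn: "qpow P H n x y \<ge> 0"
  by (rule qpow_nonneg) (rule Pnn)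

lemma bound:
  assumes "x \<in> H"
  shows "(\<Sum>n<N. \<Sum>y\<in>H. qpow P H n x y) + (\<Sum>y\<in>H. qpow P H N x y * g y) \<le> g x"
  using assms
proof (induction N arbitrary: x)
  case 0
  then show ?case using finH by (simp add: sum_idm_left)
next
  case (Suc N)
  have b0: "(\<Sum>y\<in>H. qpow P H 0 x y) = 1"
    using sum_idm_left[OF finH Suc.prems, of "\<lambda>_. 1"] by simp
  have bs: "(\<Sum>y\<in>H. qpow P H (Suc n) x y) = (\<Sum>z\<in>H. P x z * (\<Sum>y\<in>H. qpow P H n z y))" for n
  proof -
    have "(\<Sum>y\<in>H. qpow P H (Suc n) x y) = (\<Sum>y\<in>H. \<Sum>z\<in>H. P x z * qpow P H n z y)" by simp
    also have "\<dots> = (\<Sum>z\<in>H. \<Sum>y\<in>H. P x z * qpow P H n z y)" by (rule sum.swap)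
    also have "\<dots> = (\<Sum>z\<in>H. P x z * (\<Sum>y\<in>H. qpow P H n z y))" by (simp add: sum_distrib_left)
    finally show ?thesis .
  qed
  have as: "(\<Sum>y\<in>H. qpow P H (Suc N) x y * g y) = (\<Sum>z\<in>H. P x z * (\<Sum>y\<in>H. qpow P H N z y * g y))"
  proof -
    have "(\<Sum>y\<in>H. qpow P H (Suc N) x y * g y) = (\<Sum>y\<in>H. \<Sum>z\<in>H. P x z * (qpow P H N z y * g y))"
      by (simp add: sum_distrib_right mult.assoc)
    also have "\<dots> = (\<Sum>z\<in>H. \<Sum>y\<in>H. P x z * (qpow P H N z y * g y))" by (rule sum.swap)
    also have "\<dots> = (\<Sum>z\<in>H. P x z * (\<Sum>y\<in>H. qpow P H N z y * g y))" by (simp add: sum_distrib_left)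
    finally show ?thesis .
  qed
  have sw: "(\<Sum>n<N. \<Sum>z\<in>H. P x z * (\<Sum>y\<in>H. qpow P H n z y)) = (\<Sum>z\<in>H. P x z * (\<Sum>n<N. \<Sum>y\<in>H. qpow P H n z y))"
    by (simp add: sum_distrib_left) (rule sum.swap)
  have "(\<Sum>n<Suc N. \<Sum>y\<in>H. qpow P H n x y) + (\<Sum>y\<in>H. qpow P H (Suc N) x y * g y)
      = 1 + (\<Sum>z\<in>H. P x z * ((\<Sum>n<N. \<Sum>y\<in>H. qpow P H n z y) + (\<Sum>y\<in>H. qpow P H N z y * g y)))"
    unfolding sum.lessThan_Suc_shift b0 bs as sw by (simp add: distrib_left sum.distrib)
  also have "\<dots> \<le> 1 + (\<Sum>z\<in>H. P x z * g z)"
    using Suc.IH Pnn by (auto intro!: sum_mono mult_left_mono)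
  also have "\<dots> \<le> g x" using drift[OF Suc.prems] by simp
  finally show ?case .
qed

lemma qpow_summable:
  assumes "x \<in> H" "y \<in> H"
  shows "summable (\<lambda>n. qpow P H n x y)"
proof (rule summableI_nonneg_bounded)
  show "0 \<le> qpow P H n x y" for n using qnn by blast
  fix N
  have "(\<Sum>n<N. qpow P H n x y) \<le> (\<Sum>n<N. \<Sum>y\<in>H. qpow P H n x y)"
    using assms finH qnn
    by (intro sum_mono member_le_sum) auto
  also have "\<dots> \<le> g x"
    using bound[OF assms(1), of N] gnn finH qnn
    by (smt (verit, ccfv_SIG) mult_nonneg_nonneg sum_nonneg)
  finally show "(\<Sum>n<N. qpow P H n x y) \<le> g x" .
qed

lemma nmat_nonneg: "x \<in> H \<Longrightarrow> y \<in> H \<Longrightarrow> nmat P H x y \<ge> 0"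
  unfolding nmat_def by (rule suminf_nonneg) (auto intro: qpow_summable qnn)

lemma nmat_split: 
  assumes "x \<in> H" "y \<in> H"
  shows "nmat P H x y = idm x y + (\<Sum>n. qpow P H (Suc n) x y)"
  unfolding nmat_def using suminf_split_head[OF qpow_summable[OF assms]] by simp

lemma nmat_left:
  assumes "x \<in> H" "y \<in> H"
  shows "(\<Sum>z\<in>H. (idm x z - P x z) * nmat P H z y) = idm x y"
proof -
  have "(\<Sum>n. qpow P H (Suc n) x y) = (\<Sum>n. \<Sum>z\<in>H. P x z * qpow P H n z y)" by simp
  also have "\<dots> = (\<Sum>z\<in>H. \<Sum>n. P x z * qpow P H n z y)"
    using qpow_summable assms by (intro suminf_sum) (auto intro: summable_mult)
  also have "\<dots> = (\<Sum>z\<in>H. P x z * nmat P H z y)"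
    unfolding nmat_def using qpow_summable assms by (intro sum.cong refl) (simp add: suminf_mult)
  finally have e: "(\<Sum>n. qpow P H (Suc n) x y) = (\<Sum>z\<in>H. P x z * nmat P H z y)" .
  have "(\<Sum>z\<in>H. (idm x z - P x z) * nmat P H z y) = (\<Sum>z\<in>H. idm x z * nmat P H z y) - (\<Sum>z\<in>H. P x z * nmat P H z y)"
    by (simp add: left_diff_distrib sum_subtractf)
  also have "\<dots> = nmat P H x y - (\<Sum>z\<in>H. P x z * nmat P H z y)"
    using finH assms by (simp add: sum_idm_left)
  finally show ?thesis using nmat_split[OF assms] e by simp
qed

lemma nmat_right:
  assumes "x \<in> H" "y \<in> H"
  shows "(\<Sum>z\<in>H. nmat P H x z * (idm z y - P z y)) = idm x y"
proof -
  have "(\<Sum>n. qpow P H (Suc n) x y) = (\<Sum>n. \<Sum>z\<in>H. qpow P H n x z * P z y)"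
    using qpow_comm[OF finH assms] by simp
  also have "\<dots> = (\<Sum>z\<in>H. \<Sum>n. qpow P H n x z * P z y)"
    using qpow_summable assms by (intro suminf_sum) (auto intro: summable_mult2)
  also have "\<dots> = (\<Sum>z\<in>H. nmat P H x z * P z y)"
    unfolding nmat_def using qpow_summable assms by (intro sum.cong refl) (simp add: suminf_mult2)
  finally have e: "(\<Sum>n. qpow P H (Suc n) x y) = (\<Sum>z\<in>H. nmat P H x z * P z y)" .
  have "(\<Sum>z\<in>H. nmat P H x z * (idm z y - P z y)) = (\<Sum>z\<in>H. nmat P H x z * idm z y) - (\<Sum>z\<in>H. nmat P H x z * P z y)"
    by (simp add: right_diff_distrib sum_subtractf)
  also have "\<dots> = nmat P H x y - (\<Sum>z\<in>H. nmat P H x z * P z y)"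
    using finH assms by (simp add: sum_idm_right)
  finally show ?thesis using nmat_split[OF assms] e by simp
qed

lemma nmat_inverse: "is_inverse_on H (\<lambda>a b. idm a b - P a b) (nmat P H)"
  unfolding is_inverse_on_def using nmat_left nmat_right by auto

lemma inv_eq_nmat: "x \<in> H \<Longrightarrow> y \<in> H \<Longrightarrow> inv_on H (\<lambda>a b. idm a b - P a b) x y = nmat P H x y"
  using inv_on_eq[OF finH nmat_inverse] by blast

end

lemma taboo_formula:
  assumes "finite H"
  shows "taboo P H (Suc n) x y = (\<Sum>z\<in>H. P x z * (\<Sum>w\<in>H. qpow P H n z w * P w y))"
proof (induction n arbitrary: x)
  case 0
  then show ?case using assms by (auto simp: sum_idm_left intro!: sum.cong)
next
  case (Suc n)
  have "taboo P H (Suc (Suc n)) x y = (\<Sum>z\<in>H. P x z * taboo P H (Suc n) z y)"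
    using assms by simp
  also have "\<dots> = (\<Sum>z\<in>H. P x z * (\<Sum>z'\<in>H. P z z' * (\<Sum>w\<in>H. qpow P H n z' w * P w y)))"
    using Suc by simp
  also have "\<dots> = (\<Sum>z\<in>H. P x z * (\<Sum>w\<in>H. qpow P H (Suc n) z w * P w y))"
    by (simp add: sum_swap_mult)
  finally show ?case .
qed



lemma stoch_nonneg: "stochastic P \<Longrightarrow> P x y \<ge> 0"
  unfolding stochastic_def by blast

lemma stoch_sum_le1:
  assumes "stochastic P" "finite F"
  shows "(\<Sum>y\<in>F. P x y) \<le> 1"
proof -
  have "(P x has_sum 1) UNIV" using assms unfolding stochastic_def by blast
  then show ?thesis
    using finite_sum_le_has_sum[where f="P x" and S=1 and A=UNIV and B=F] assms stoch_nonneg[OF assms(1)] by auto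
qed

locale mc =
  fixes P :: "'a \<Rightarrow> 'a \<Rightarrow> real" and K A :: "'a set" and g2 :: "'a \<Rightarrow> real"
  assumes stoch: "stochastic P" and finA: "finite A" and KA: "K \<subseteq> A" and Kne: "K \<noteq> {}"
    and g2nn: "\<forall>x\<in>-K. g2 x \<ge> 0"
    and drift2: "\<forall>x\<in>-K. (\<lambda>y. P x y * g2 y) summable_on (-K) \<and>
                        infsum (\<lambda>y. P x y * g2 y) (-K) \<le> g2 x - 1"
begin

lemma Pnn: "P x y \<ge> 0" using stoch by (rule stoch_nonneg)

lemma finK: "finite K" using finA KA finite_subset by blast
lemma finH: "finite (A - K)" using finA by simp

lemma drift2_H:
  assumes "x \<in> A - K"
  shows "(\<Sum>y\<in>A - K. P x y * g2 y) \<le> g2 x - 1"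
proof -
  have "(\<Sum>y\<in>A - K. P x y * g2 y) \<le> infsum (\<lambda>y. P x y * g2 y) (-K)"
    using drift2 assms finH g2nn Pnn by (intro finite_sum_le_infsum) auto
  then show ?thesis using drift2 assms by force
qed

sublocale neumann P "A - K" g2
  by unfold_locales (use finH Pnn g2nn drift2_H in auto)

abbreviation "N \<equiv> nmat P (A - K)"

lemma N_nn: "N x y \<ge> 0" if "x \<in> A - K" "y \<in> A - K" using nmat_nonneg that by blast

lemma G_formula:
  "exit_G P K A x y = P x y + (\<Sum>z\<in>A - K. P x z * (\<Sum>w\<in>A - K. N z w * P w y))"
proof -
  have "(\<lambda>n. taboo P (A - K) (Suc n) x y) sums (\<Sum>z\<in>A - K. P x z * (\<Sum>w\<in>A - K. N z w * P w y))"
    unfolding taboo_formula[OF finH]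
    apply (intro sums_sum sums_mult sums_mult2)
    unfolding nmat_def using qpow_summable by (auto intro: summable_sums)
  from sums_Suc[OF this] show ?thesis
    unfolding exit_G_def by (simp add: sums_iff add.commute)
qed

lemma G_nn: "x \<in> K \<Longrightarrow> y \<in> K \<Longrightarrow> exit_G P K A x y \<ge> 0"
  unfolding G_formula using Pnn N_nn
  by (intro add_nonneg_nonneg sum_nonneg mult_nonneg_nonneg) auto

lemma G_row:
  assumes "x \<in> K"
  shows "(\<Sum>y\<in>K. exit_G P K A x y) \<le> 1"
proof -
  define pK where "pK w = (\<Sum>y\<in>K. P w y)" for w
  have pKle: "pK w \<le> (\<Sum>u\<in>A - K. (idm w u - P w u))" if "w \<in> A - K" for w
  proof -
    have "pK w + (\<Sum>u\<in>A - K. P w u) = (\<Sum>u\<in>K \<union> (A - K). P w u)"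
      unfolding pK_def using finK finH by (subst sum.union_disjoint) auto
    also have "\<dots> \<le> 1" using stoch_sum_le1[OF stoch] finK finH by blast
    finally have "pK w \<le> 1 - (\<Sum>u\<in>A - K. P w u)" by simp
    moreover have "(\<Sum>u\<in>A - K. idm w u) = 1" using sum_idm_left[OF finH that, where f="\<lambda>_. 1"] by simp
    ultimately show ?thesis by (simp add: sum_subtractf)
  qed
  have inner: "(\<Sum>w\<in>A - K. N z w * pK w) \<le> 1" if z: "z \<in> A - K" for z
  proof -
    have "(\<Sum>w\<in>A - K. N z w * pK w) \<le> (\<Sum>w\<in>A - K. N z w * (\<Sum>u\<in>A - K. (idm w u - P w u)))"
      using pKle N_nn z by (intro sum_mono mult_left_mono) auto
    also have "\<dots> = (\<Sum>u\<in>A - K. \<Sum>w\<in>A - K. N z w * (idm w u - P w u))"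
      by (simp add: sum_distrib_left) (rule sum.swap)
    also have "\<dots> = (\<Sum>u\<in>A - K. idm z u)"
      using nmat_right z by (intro sum.cong) auto
    also have "\<dots> = 1" using sum_idm_left[OF finH z, where f="\<lambda>_. 1"] by simp
    finally show ?thesis .
  qed
  have "(\<Sum>y\<in>K. exit_G P K A x y) = pK x + (\<Sum>z\<in>A - K. P x z * (\<Sum>w\<in>A - K. N z w * pK w))"
  proof -
    have "(\<Sum>y\<in>K. exit_G P K A x y) = pK x + (\<Sum>y\<in>K. \<Sum>z\<in>A - K. P x z * (\<Sum>w\<in>A - K. N z w * P w y))"
      unfolding G_formula pK_def by (simp add: sum.distrib)
    also have "(\<Sum>y\<in>K. \<Sum>z\<in>A - K. P x z * (\<Sum>w\<in>A - K. N z w * P w y))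
        = (\<Sum>z\<in>A - K. \<Sum>y\<in>K. P x z * (\<Sum>w\<in>A - K. N z w * P w y))" by (rule sum.swap)
    also have "\<dots> = (\<Sum>z\<in>A - K. P x z * (\<Sum>w\<in>A - K. N z w * pK w))"
    proof (intro sum.cong refl)
      fix z
      have "(\<Sum>y\<in>K. P x z * (\<Sum>w\<in>A - K. N z w * P w y)) = P x z * (\<Sum>y\<in>K. \<Sum>w\<in>A - K. N z w * P w y)"
        by (simp add: sum_distrib_left)
      also have "(\<Sum>y\<in>K. \<Sum>w\<in>A - K. N z w * P w y) = (\<Sum>w\<in>A - K. \<Sum>y\<in>K. N z w * P w y)" by (rule sum.swap)
      also have "\<dots> = (\<Sum>w\<in>A - K. N z w * pK w)" unfolding pK_def by (simp add: sum_distrib_left)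
      finally show "(\<Sum>y\<in>K. P x z * (\<Sum>w\<in>A - K. N z w * P w y)) = P x z * (\<Sum>w\<in>A - K. N z w * pK w)" .
    qed
    finally show ?thesis .
  qed
  also have "\<dots> \<le> pK x + (\<Sum>z\<in>A - K. P x z)"
    using inner Pnn by (intro add_left_mono sum_mono mult_left_le) auto
  also have "\<dots> = (\<Sum>u\<in>K \<union> (A - K). P x u)"
    unfolding pK_def using finK finH by (subst sum.union_disjoint) auto
  also have "\<dots> \<le> 1" using stoch_sum_le1[OF stoch] finK finH by blast
  finally show ?thesis .
qed

end



lemma maxprinciple:
  fixes G M :: "'a \<Rightarrow> 'a \<Rightarrow> real"
  assumes finK: "finite K" and Kne: "K \<noteq> {}"
    and Gnn: "\<And>x y. x \<in> K \<Longrightarrow> y \<in> K \<Longrightarrow> G x y \<ge> 0"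
    and Grow: "\<And>x. x \<in> K \<Longrightarrow> (\<Sum>y\<in>K. G x y) \<le> 1"
    and irr: "irreducible_on K G"
    and inv: "is_inverse_on K (\<lambda>a b. idm a b - G a b) M"
    and y: "y \<in> K" and x: "x \<in> K"
  shows "M x y \<ge> 0"
proof (rule ccontr)
  assume neg: "\<not> M x y \<ge> 0"
  define v where "v z = M z y" for z
  have veq: "v i = idm i y + (\<Sum>z\<in>K. G i z * v z)" if i: "i \<in> K" for i
  proof -
    have "(\<Sum>z\<in>K. (idm i z - G i z) * M z y) = idm i y" using inv i y unfolding is_inverse_on_def by blast
    moreover have "(\<Sum>z\<in>K. (idm i z - G i z) * M z y) = v i - (\<Sum>z\<in>K. G i z * v z)"
      using sum_idm_left[OF finK i, where f="\<lambda>z. M z y"] unfolding v_def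
      by (simp add: left_diff_distrib sum_subtractf)
    ultimately show ?thesis by simp
  qed
  define m where "m = Min (v ` K)"
  have mle: "m \<le> v z" if "z \<in> K" for z unfolding m_def using finK that by simp
  have mneg: "m < 0" using mle[OF x] neg unfolding v_def by simp
  have "m \<in> v ` K" unfolding m_def using finK Kne by (intro Min_in) auto
  then obtain i0 where i0: "i0 \<in> K" "v i0 = m" by auto
  define S where "S = {i\<in>K. v i = m}"
  have key: "(\<forall>z\<in>K. G i z > 0 \<longrightarrow> z \<in> S) \<and> (\<Sum>z\<in>K. G i z) = 1" if iS: "i \<in> S" for i
  proof -
    have i: "i \<in> K" and vi: "v i = m" using iS unfolding S_def by auto
    have "(\<Sum>z\<in>K. G i z * v z) = m * (\<Sum>z\<in>K. G i z) + (\<Sum>z\<in>K. G i z * (v z - m))"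
      by (simp add: sum_distrib_left right_diff_distrib sum_subtractf mult.commute)
    moreover have "idm i y \<ge> 0" by (simp add: idm_def)
    moreover have s1: "(\<Sum>z\<in>K. G i z * (v z - m)) \<ge> 0"
      using Gnn i mle by (intro sum_nonneg mult_nonneg_nonneg) auto
    moreover have "m * (\<Sum>z\<in>K. G i z) \<ge> m"
      using Grow[OF i] mneg by (simp add: mult_le_cancel_left1)
    ultimately have e1: "(\<Sum>z\<in>K. G i z * (v z - m)) = 0" and e2: "m * (\<Sum>z\<in>K. G i z) = m"
      using veq[OF i] vi by linarith+
    have "\<forall>z\<in>K. G i z * (v z - m) = 0"
      using e1 sum_nonneg_eq_0_iff[OF finK, of "\<lambda>z. G i z * (v z - m)"] Gnn i mle
      by (simp add: mult_nonneg_nonneg)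
    then have "\<forall>z\<in>K. G i z > 0 \<longrightarrow> z \<in> S" unfolding S_def by auto
    moreover have "(\<Sum>z\<in>K. G i z) = 1" using e2 mneg by simp
    ultimately show ?thesis by blast
  qed
  have allS: "j \<in> S" if j: "j \<in> K" for j
  proof -
    have "(i0, j) \<in> {(a, b). a \<in> K \<and> b \<in> K \<and> G a b > 0}\<^sup>*"
      using irr i0 j unfolding irreducible_on_def by blast
    then show ?thesis
    proof (induction rule: rtrancl_induct)
      case base then show ?case using i0 unfolding S_def by auto
    next
      case (step a b) then show ?case using key by auto
    qed
  qed
  have rows1: "(\<Sum>z\<in>K. G i z) = 1" if "i \<in> K" for i using key allS that by blast
  have "(\<Sum>y'\<in>K. \<Sum>z\<in>K. M x z * (idm z y' - G z y')) = (\<Sum>y'\<in>K. idm x y')"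
    using inv x unfolding is_inverse_on_def by (intro sum.cong) auto
  also have "\<dots> = 1" using sum_idm_left[OF finK x, where f="\<lambda>_. 1"] by simp
  finally have 1: "(\<Sum>y'\<in>K. \<Sum>z\<in>K. M x z * (idm z y' - G z y')) = 1" .
  have "(\<Sum>y'\<in>K. \<Sum>z\<in>K. M x z * (idm z y' - G z y')) = (\<Sum>z\<in>K. M x z * (\<Sum>y'\<in>K. (idm z y' - G z y')))"
    by (subst sum.swap) (simp add: sum_distrib_left)
  also have "\<dots> = (\<Sum>z\<in>K. M x z * 0)"
  proof (intro sum.cong refl)
    fix z assume z: "z \<in> K"
    have "(\<Sum>y'\<in>K. (idm z y' - G z y')) = (\<Sum>y'\<in>K. idm z y') - (\<Sum>y'\<in>K. G z y')" by (simp add: sum_subtractf)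
    also have "\<dots> = 0" using sum_idm_left[OF finK z, where f="\<lambda>_. 1"] rows1[OF z] by simp
    finally show "M x z * (\<Sum>y'\<in>K. (idm z y' - G z y')) = M x z * 0" by simp
  qed
  finally show False using 1 by simp
qed

lemma inv_diag:
  fixes G M :: "'a \<Rightarrow> 'a \<Rightarrow> real"
  assumes finK: "finite K"
    and Gnn: "\<And>x y. x \<in> K \<Longrightarrow> y \<in> K \<Longrightarrow> G x y \<ge> 0"
    and Mnn: "\<And>x y. x \<in> K \<Longrightarrow> y \<in> K \<Longrightarrow> M x y \<ge> 0"
    and inv: "is_inverse_on K (\<lambda>a b. idm a b - G a b) M"
    and x: "x \<in> K"
  shows "M x x \<ge> 1"
proof -
  have "(\<Sum>z\<in>K. (idm x z - G x z) * M z x) = idm x x" using inv x unfolding is_inverse_on_def by blast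
  moreover have "(\<Sum>z\<in>K. (idm x z - G x z) * M z x) = M x x - (\<Sum>z\<in>K. G x z * M z x)"
    using sum_idm_left[OF finK x, where f="\<lambda>z. M z x"]
    by (simp add: left_diff_distrib sum_subtractf)
  moreover have "(\<Sum>z\<in>K. G x z * M z x) \<ge> 0" using Gnn Mnn x by (intro sum_nonneg mult_nonneg_nonneg) auto
  ultimately show ?thesis by (simp add: idm_def)
qed



lemma infsum_finite_family:
  fixes f :: "'i \<Rightarrow> 'a \<Rightarrow> real"
  assumes "finite I" "\<And>i. i \<in> I \<Longrightarrow> f i summable_on A"
  shows "(\<lambda>x. \<Sum>i\<in>I. f i x) summable_on A \<and> infsum (\<lambda>x. \<Sum>i\<in>I. f i x) A = (\<Sum>i\<in>I. infsum (f i) A)"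
  using assms
proof (induction I rule: finite_induct)
  case empty then show ?case by simp
next
  case (insert i I)
  have s1: "f i summable_on A" using insert by simp
  have s2: "(\<lambda>x. \<Sum>i\<in>I. f i x) summable_on A" using insert by simp
  show ?case using insert s1 s2 by (simp add: summable_on_add infsum_add)
qed

lemma my_infsum_diff:
  fixes f g :: "'a \<Rightarrow> real"
  assumes "f summable_on A" "g summable_on A"
  shows "(\<lambda>x. f x - g x) summable_on A \<and> infsum (\<lambda>x. f x - g x) A = infsum f A - infsum g A"
proof -
  have "((\<lambda>x. - g x) has_sum (- infsum g A)) A" using assms(2) by (simp add: has_sum_uminus has_sum_infsum)
  then have "((\<lambda>x. f x + - g x) has_sum (infsum f A + - infsum g A)) A"
    using assms(1) by (intro has_sum_add) (auto simp: has_sum_infsum)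
  then show ?thesis by (simp add: has_sum_iff)
qed

lemma summable_cmp:
  fixes f g :: "'a \<Rightarrow> real"
  assumes "g summable_on A" "\<And>x. x \<in> A \<Longrightarrow> 0 \<le> f x" "\<And>x. x \<in> A \<Longrightarrow> f x \<le> g x"
  shows "f summable_on A"
  using summable_on_comparison_test[OF assms(1)] assms by blast

lemma stat_nonneg: "stationary_dist P \<pi> \<Longrightarrow> \<pi> x \<ge> 0"
  unfolding stationary_dist_def by blast

lemma stat_summable: "stationary_dist P \<pi> \<Longrightarrow> \<pi> summable_on A"
proof -
  assume s: "stationary_dist P \<pi>"
  then have "\<pi> summable_on UNIV" unfolding stationary_dist_def summable_on_def by blast
  then show ?thesis using summable_on_subset_banach by blast
qed

lemma stat_eq: "stationary_dist P \<pi> \<Longrightarrow> ((\<lambda>x. \<pi> x * P x y) has_sum \<pi> y) UNIV"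
  unfolding stationary_dist_def by blast

lemma hard_bound:
  fixes P :: "'a \<Rightarrow> 'a \<Rightarrow> real" and \<pi> f u :: "'a \<Rightarrow> real" and C :: "'a set"
  assumes stoch: "stochastic P" and stat: "stationary_dist P \<pi>" and finK: "finite (-C)"
    and fnn: "\<And>x. x \<in> C \<Longrightarrow> f x \<ge> 0" and unn: "\<And>x. x \<in> C \<Longrightarrow> u x \<ge> 0"
    and usum: "\<And>x. (\<lambda>y. P x y * u y) summable_on C"
    and drift: "\<And>x. x \<in> C \<Longrightarrow> infsum (\<lambda>y. P x y * u y) C \<le> u x - f x"
  shows "(\<lambda>y. \<pi> y * f y) summable_on C \<and>
         infsum (\<lambda>y. \<pi> y * f y) C \<le> (\<Sum>x\<in>-C. \<pi> x * infsum (\<lambda>y. P x y * u y) C)"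
proof -
  define B0 where "B0 = (\<Sum>x\<in>-C. \<pi> x * infsum (\<lambda>y. P x y * u y) C)"
  have Pnn: "P x y \<ge> 0" for x y using stoch_nonneg[OF stoch] .
  have pinn: "\<pi> x \<ge> 0" for x using stat_nonneg[OF stat] .
  have claim: "(\<Sum>y\<in>F. \<pi> y * (if u y \<le> m then f y else 0)) \<le> B0"
    if m: "m \<ge> 0" and F: "finite F" "F \<subseteq> C" for m F
  proof -
    define um where "um y = min (u y) m" for y
    define fm where "fm y = (if u y \<le> m then f y else 0)" for y
    define Qum where "Qum x = infsum (\<lambda>y. P x y * um y) C" for x
    define Qu where "Qu x = infsum (\<lambda>y. P x y * u y) C" for x
    have umnn: "y \<in> C \<Longrightarrow> um y \<ge> 0" for y unfolding um_def using unn m by simp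
    have a: "(\<lambda>y. P x y * um y) summable_on C" for x
      by (rule summable_cmp[OF usum[of x]]) (use umnn Pnn in \<open>auto simp: um_def intro!: mult_left_mono\<close>)
    have b: "Qum x \<le> m" for x
      unfolding Qum_def
    proof (rule infsum_le_finite_sums[OF a])
      fix F' assume "finite F'" "F' \<subseteq> C"
      have "(\<Sum>y\<in>F'. P x y * um y) \<le> (\<Sum>y\<in>F'. P x y * m)"
        by (intro sum_mono mult_left_mono) (auto simp: um_def Pnn)
      also have "\<dots> = m * (\<Sum>y\<in>F'. P x y)" by (simp add: sum_distrib_left mult.commute)
      also have "\<dots> \<le> m * 1" using stoch_sum_le1[OF stoch \<open>finite F'\<close>] m by (intro mult_left_mono) auto
      finally show "(\<Sum>y\<in>F'. P x y * um y) \<le> m" by simp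
    qed
    have Qumnn: "Qum x \<ge> 0" for x unfolding Qum_def using Pnn umnn by (intro infsum_nonneg) auto
    have c: "Qum x \<le> Qu x" for x
      unfolding Qum_def Qu_def using a usum by (intro infsum_mono) (auto simp: um_def Pnn intro!: mult_left_mono)
    have d: "fm x + Qum x \<le> um x" if x: "x \<in> C" for x
    proof (cases "u x \<le> m")
      case True then show ?thesis using c[of x] drift[OF x] unfolding fm_def um_def Qu_def by auto
    next
      case False then show ?thesis using b[of x] unfolding fm_def um_def by auto
    qed
    have fmnn: "x \<in> C \<Longrightarrow> fm x \<ge> 0" for x unfolding fm_def using fnn by auto
    have pum_s: "(\<lambda>y. \<pi> y * um y) summable_on C"
      by (rule summable_cmp[of "\<lambda>y. \<pi> y * m"])
        (use pinn unn m in \<open>auto intro!: summable_on_cmult_left stat_summable[OF stat] mult_left_mono mult_nonneg_nonneg simp: um_def\<close>)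
    have pfm_s: "(\<lambda>y. \<pi> y * fm y) summable_on C"
    proof (rule summable_cmp[OF pum_s])
      fix x assume x: "x \<in> C"
      show "0 \<le> \<pi> x * fm x" using pinn fmnn[OF x] by simp
      have "fm x \<le> um x" using d[OF x] Qumnn[of x] by linarith
      then show "\<pi> x * fm x \<le> \<pi> x * um x" using pinn by (intro mult_left_mono) auto
    qed
    have pQ_s: "(\<lambda>x. \<pi> x * Qum x) summable_on A" for A
      by (rule summable_cmp[of "\<lambda>y. \<pi> y * m"])
        (auto intro!: summable_on_cmult_left stat_summable[OF stat] mult_left_mono simp: pinn Qumnn b)
    have e: "infsum (\<lambda>y. \<pi> y * um y) C \<le> infsum (\<lambda>x. \<pi> x * Qum x) UNIV"
    proof (rule infsum_le_finite_sums[OF pum_s])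
      fix F' assume F': "finite F'" "F' \<subseteq> C"
      have hs: "((\<lambda>x. \<pi> x * P x y * um y) has_sum (\<pi> y * um y)) UNIV" for y
        using has_sum_cmult_left[OF stat_eq[OF stat, of y], of "um y"] by simp
      have hsum: "(\<lambda>x. \<pi> x * P x y * um y) summable_on UNIV" for y
        using hs[of y] unfolding summable_on_def by blast
      have fam: "(\<lambda>x. \<Sum>y\<in>F'. \<pi> x * P x y * um y) summable_on UNIV \<and>
          infsum (\<lambda>x. \<Sum>y\<in>F'. \<pi> x * P x y * um y) UNIV = (\<Sum>y\<in>F'. infsum (\<lambda>x. \<pi> x * P x y * um y) UNIV)"
        by (rule infsum_finite_family[OF F'(1)]) (rule hsum)
      have "(\<Sum>y\<in>F'. \<pi> y * um y) = (\<Sum>y\<in>F'. infsum (\<lambda>x. \<pi> x * P x y * um y) UNIV)"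
        using hs by (intro sum.cong refl) (metis infsumI)
      also have "\<dots> = infsum (\<lambda>x. \<Sum>y\<in>F'. \<pi> x * P x y * um y) UNIV"
        using fam by simp
      also have "\<dots> \<le> infsum (\<lambda>x. \<pi> x * Qum x) UNIV"
      proof (rule infsum_mono)
        show "(\<lambda>x. \<Sum>y\<in>F'. \<pi> x * P x y * um y) summable_on UNIV"
          using fam by blast
        show "(\<lambda>x. \<pi> x * Qum x) summable_on UNIV" by (rule pQ_s)
        fix x
        have "(\<Sum>y\<in>F'. P x y * um y) \<le> Qum x"
          unfolding Qum_def using F' a Pnn umnn by (intro finite_sum_le_infsum) (auto intro!: mult_nonneg_nonneg)
        then have "\<pi> x * (\<Sum>y\<in>F'. P x y * um y) \<le> \<pi> x * Qum x" using pinn by (intro mult_left_mono) auto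
        then show "(\<Sum>y\<in>F'. \<pi> x * P x y * um y) \<le> \<pi> x * Qum x"
          by (simp add: sum_distrib_left mult.assoc)
      qed
      finally show "(\<Sum>y\<in>F'. \<pi> y * um y) \<le> infsum (\<lambda>x. \<pi> x * Qum x) UNIV" .
    qed
    have f: "infsum (\<lambda>x. \<pi> x * Qum x) UNIV = (\<Sum>x\<in>-C. \<pi> x * Qum x) + infsum (\<lambda>x. \<pi> x * Qum x) C"
    proof -
      have "infsum (\<lambda>x. \<pi> x * Qum x) (-C \<union> C) = infsum (\<lambda>x. \<pi> x * Qum x) (-C) + infsum (\<lambda>x. \<pi> x * Qum x) C"
        by (rule infsum_Un_disjoint) (auto intro: pQ_s)
      then show ?thesis using finK by simp
    qed
    have g: "infsum (\<lambda>x. \<pi> x * Qum x) C \<le> infsum (\<lambda>y. \<pi> y * um y) C - infsum (\<lambda>y. \<pi> y * fm y) C"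
    proof -
      have "infsum (\<lambda>x. \<pi> x * Qum x) C \<le> infsum (\<lambda>x. \<pi> x * um x - \<pi> x * fm x) C"
      proof (rule infsum_mono[OF pQ_s my_infsum_diff[THEN conjunct1, OF pum_s pfm_s]])
        fix x assume x: "x \<in> C"
        have "Qum x \<le> um x - fm x" using d[OF x] by linarith
        then have "\<pi> x * Qum x \<le> \<pi> x * (um x - fm x)" using pinn by (intro mult_left_mono) auto
        then show "\<pi> x * Qum x \<le> \<pi> x * um x - \<pi> x * fm x" by (simp add: right_diff_distrib)
      qed
      also have "\<dots> = infsum (\<lambda>y. \<pi> y * um y) C - infsum (\<lambda>y. \<pi> y * fm y) C"
        using my_infsum_diff[OF pum_s pfm_s] by blast
      finally show ?thesis .
    qed
    have h: "(\<Sum>x\<in>-C. \<pi> x * Qum x) \<le> B0"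
      unfolding B0_def using c pinn by (intro sum_mono mult_left_mono) (auto simp: Qu_def)
    have "infsum (\<lambda>y. \<pi> y * fm y) C \<le> B0" using e f g h by linarith
    moreover have "(\<Sum>y\<in>F. \<pi> y * fm y) \<le> infsum (\<lambda>y. \<pi> y * fm y) C"
      using F pfm_s pinn fmnn by (intro finite_sum_le_infsum) (auto intro!: mult_nonneg_nonneg)
    ultimately show ?thesis unfolding fm_def by simp
  qed
  have fin: "(\<Sum>y\<in>F. \<pi> y * f y) \<le> B0" if F: "finite F" "F \<subseteq> C" for F
  proof -
    define m where "m = (\<Sum>y\<in>F. u y)"
    have um: "u y \<le> m" if "y \<in> F" for y
      unfolding m_def using F unn that by (intro member_le_sum) auto
    have m0: "m \<ge> 0" unfolding m_def using F unn by (intro sum_nonneg) auto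
    have "(\<Sum>y\<in>F. \<pi> y * f y) = (\<Sum>y\<in>F. \<pi> y * (if u y \<le> m then f y else 0))"
      using um by (intro sum.cong) auto
    also have "\<dots> \<le> B0" by (rule claim[OF m0 F])
    finally show ?thesis .
  qed
  have nn: "x \<in> C \<Longrightarrow> \<pi> x * f x \<ge> 0" for x using pinn fnn by simp
  have summ: "(\<lambda>y. \<pi> y * f y) summable_on C"
    by (rule nonneg_bdd_above_summable_on[OF nn]) (use fin in \<open>auto intro!: bdd_aboveI\<close>)
  moreover have "infsum (\<lambda>y. \<pi> y * f y) C \<le> B0"
    by (rule infsum_le_finite_sums[OF summ fin])
  ultimately show ?thesis unfolding B0_def by blast
qed



lemma decomp:
  fixes G M :: "'a \<Rightarrow> 'a \<Rightarrow> real" and \<phi> :: "'a \<Rightarrow> real"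
  assumes finK: "finite K"
    and inv: "is_inverse_on K (\<lambda>a b. idm a b - G a b) M"
    and spos: "\<And>x. x \<in> K \<Longrightarrow> (\<Sum>w\<in>K. M x w) > 0"
    and phi: "\<And>y. y \<in> K \<Longrightarrow> (\<Sum>x\<in>K. \<phi> x * G x y) \<le> \<phi> y"
  shows "\<exists>\<omega>. (\<forall>x\<in>K. \<omega> x \<ge> 0) \<and>
     (\<forall>q. (\<Sum>y\<in>K. \<phi> y * q y) = (\<Sum>x\<in>K. \<omega> x * (\<Sum>y\<in>K. M x y / (\<Sum>w\<in>K. M x w) * q y)))"
proof -
  define c where "c x = \<phi> x - (\<Sum>z\<in>K. \<phi> z * G z x)" for x
  define s where "s x = (\<Sum>w\<in>K. M x w)" for x
  have rep: "\<phi> y = (\<Sum>x\<in>K. c x * M x y)" if y: "y \<in> K" for y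
  proof -
    have "(\<Sum>x\<in>K. c x * M x y) = (\<Sum>x\<in>K. \<phi> x * M x y) - (\<Sum>x\<in>K. (\<Sum>z\<in>K. \<phi> z * G z x) * M x y)"
      unfolding c_def by (simp add: left_diff_distrib sum_subtractf)
    also have "(\<Sum>x\<in>K. (\<Sum>z\<in>K. \<phi> z * G z x) * M x y) = (\<Sum>z\<in>K. \<phi> z * (\<Sum>x\<in>K. G z x * M x y))"
      by (rule sum_swap_mult[symmetric])
    also have "(\<Sum>x\<in>K. \<phi> x * M x y) - (\<Sum>z\<in>K. \<phi> z * (\<Sum>x\<in>K. G z x * M x y))
        = (\<Sum>z\<in>K. \<phi> z * (\<Sum>x\<in>K. (idm z x - G z x) * M x y))"
    proof -
      have "(\<Sum>z\<in>K. \<phi> z * (\<Sum>x\<in>K. (idm z x - G z x) * M x y))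
          = (\<Sum>z\<in>K. \<phi> z * (M z y - (\<Sum>x\<in>K. G z x * M x y)))"
      proof (intro sum.cong refl)
        fix z assume z: "z \<in> K"
        have "(\<Sum>x\<in>K. (idm z x - G z x) * M x y) = (\<Sum>x\<in>K. idm z x * M x y) - (\<Sum>x\<in>K. G z x * M x y)"
          by (simp add: left_diff_distrib sum_subtractf)
        then show "\<phi> z * (\<Sum>x\<in>K. (idm z x - G z x) * M x y) = \<phi> z * (M z y - (\<Sum>x\<in>K. G z x * M x y))"
          using sum_idm_left[OF finK z, where f="\<lambda>x. M x y"] by simp
      qed
      also have "\<dots> = (\<Sum>x\<in>K. \<phi> x * M x y) - (\<Sum>z\<in>K. \<phi> z * (\<Sum>x\<in>K. G z x * M x y))"
        by (simp add: right_diff_distrib sum_subtractf)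
      finally show ?thesis by simp
    qed
    also have "\<dots> = (\<Sum>z\<in>K. \<phi> z * idm z y)"
      using inv y unfolding is_inverse_on_def by (intro sum.cong refl) auto
    also have "\<dots> = \<phi> y" using sum_idm_right[OF finK y] by simp
    finally show ?thesis by simp
  qed
  define \<omega> where "\<omega> x = c x * s x" for x
  have "\<forall>x\<in>K. \<omega> x \<ge> 0"
  proof
    fix x assume x: "x \<in> K"
    have "c x \<ge> 0" unfolding c_def using phi[OF x] by simp
    moreover have "s x \<ge> 0" unfolding s_def using spos[OF x] by simp
    ultimately show "\<omega> x \<ge> 0" unfolding \<omega>_def by simp
  qed
  moreover have "(\<Sum>y\<in>K. \<phi> y * q y) = (\<Sum>x\<in>K. \<omega> x * (\<Sum>y\<in>K. M x y / (\<Sum>w\<in>K. M x w) * q y))" for q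
  proof -
    have "(\<Sum>y\<in>K. \<phi> y * q y) = (\<Sum>y\<in>K. (\<Sum>x\<in>K. c x * M x y) * q y)"
      using rep by (intro sum.cong) auto
    also have "\<dots> = (\<Sum>x\<in>K. c x * (\<Sum>y\<in>K. M x y * q y))"
      by (rule sum_swap_mult[symmetric])
    also have "\<dots> = (\<Sum>x\<in>K. \<omega> x * (\<Sum>y\<in>K. M x y / (\<Sum>w\<in>K. M x w) * q y))"
    proof (intro sum.cong refl)
      fix x assume x: "x \<in> K"
      have sne: "s x \<noteq> 0" using spos[OF x] unfolding s_def by simp
      have "(\<Sum>y\<in>K. M x y / (\<Sum>w\<in>K. M x w) * q y) = (\<Sum>y\<in>K. M x y * q y) / s x"
        unfolding s_def by (simp add: sum_divide_distrib)
      then show "c x * (\<Sum>y\<in>K. M x y * q y) = \<omega> x * (\<Sum>y\<in>K. M x y / (\<Sum>w\<in>K. M x w) * q y)"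
        unfolding \<omega>_def using sne by simp
    qed
    finally show ?thesis .
  qed
  ultimately show ?thesis by blast
qed

lemma wsum_bounds:
  fixes \<omega> t :: "'a \<Rightarrow> real"
  assumes "finite K" "\<And>x. x \<in> K \<Longrightarrow> \<omega> x \<ge> 0"
  shows "(\<Sum>x\<in>K. \<omega> x) * Min (t ` K) \<le> (\<Sum>x\<in>K. \<omega> x * t x)"
    and "(\<Sum>x\<in>K. \<omega> x * t x) \<le> (\<Sum>x\<in>K. \<omega> x) * Max (t ` K)"
proof -
  show "(\<Sum>x\<in>K. \<omega> x) * Min (t ` K) \<le> (\<Sum>x\<in>K. \<omega> x * t x)"
    unfolding sum_distrib_right using assms by (intro sum_mono mult_left_mono) auto
  show "(\<Sum>x\<in>K. \<omega> x * t x) \<le> (\<Sum>x\<in>K. \<omega> x) * Max (t ` K)"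
    unfolding sum_distrib_right using assms by (intro sum_mono mult_left_mono) auto
qed



context mc begin

lemma p12N_eq: "p12N P K A v x = (\<Sum>z\<in>A - K. P x z * (\<Sum>u\<in>A - K. N z u * v u))"
  unfolding p12N_def using inv_eq_nmat by (intro sum.cong refl arg_cong2[where f="(*)"]) auto

lemma p12N_nn: "(\<And>u. u \<in> A - K \<Longrightarrow> v u \<ge> 0) \<Longrightarrow> p12N P K A v x \<ge> 0"
  unfolding p12N_eq using Pnn N_nn by (intro sum_nonneg mult_nonneg_nonneg) auto

lemma p12N_mono: "(\<And>u. u \<in> A - K \<Longrightarrow> v u \<le> w u) \<Longrightarrow> p12N P K A v x \<le> p12N P K A w x"
  unfolding p12N_eq using Pnn N_nn by (intro sum_mono mult_left_mono) auto

lemma p12N_add: "p12N P K A (\<lambda>u. v u + w u) x = p12N P K A v x + p12N P K A w x"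
  unfolding p12N_eq by (simp add: distrib_left sum.distrib)

lemma split_inf:
  fixes \<phi> :: "'a \<Rightarrow> real"
  assumes "(\<lambda>y. P x y * \<phi> y) summable_on (-K)"
  shows "infsum (\<lambda>y. P x y * \<phi> y) (-K) = (\<Sum>y\<in>A - K. P x y * \<phi> y) + infsum (\<lambda>y. P x y * \<phi> y) (-A)"
proof -
  have eq: "-K = (A - K) \<union> -A" using KA by auto
  have s2: "(\<lambda>y. P x y * \<phi> y) summable_on (-A)"
    by (rule summable_on_subset_banach[OF assms]) (use KA in auto)
  have "infsum (\<lambda>y. P x y * \<phi> y) ((A - K) \<union> -A) = infsum (\<lambda>y. P x y * \<phi> y) (A - K) + infsum (\<lambda>y. P x y * \<phi> y) (-A)"
    by (rule infsum_Un_disjoint) (use finH s2 in auto)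
  then show ?thesis using eq finH by simp
qed

lemma station_sub:
  assumes stat: "stationary_dist P \<pi>" and F: "finite F"
  shows "(\<Sum>x\<in>F. \<pi> x * P x y) \<le> \<pi> y"
  using finite_sum_le_has_sum[OF stat_eq[OF stat] F] stat_nonneg[OF stat] Pnn by auto

lemma hard_kappa:
  fixes \<pi> f g h :: "'a \<Rightarrow> real"
  assumes stat: "stationary_dist P \<pi>"
    and fnn: "\<And>x. f x \<ge> 0" and gnn: "\<And>x. x \<in> -K \<Longrightarrow> g x \<ge> 0" and hnn: "\<And>x. x \<in> A \<Longrightarrow> h x \<ge> 0"
    and dg: "\<forall>x\<in>-K. (\<lambda>y. P x y * g y) summable_on (-K) \<and> infsum (\<lambda>y. P x y * g y) (-K) \<le> g x - f x"
    and eg: "\<forall>x\<in>A. (\<lambda>y. P x y * g y) summable_on (-A) \<and> infsum (\<lambda>y. P x y * g y) (-A) \<le> h x"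
  shows "(\<lambda>y. \<pi> y * f y) summable_on UNIV \<and>
         infsum (\<lambda>y. \<pi> y * f y) UNIV \<le> (\<Sum>x\<in>K. \<pi> x * kappa_tilde P K A f h x)"
proof -
  define e where "e y = infsum (\<lambda>v. P y v * g v) (-A)" for y
  define g' where "g' y = (if y \<in> A - K then \<Sum>u\<in>A - K. N y u * (f u + e u) else g y)" for y
  have sA: "(\<lambda>y. P x y * g y) summable_on (-A)" for x
  proof (cases "x \<in> A")
    case True then show ?thesis using eg by blast
  next
    case False then have "x \<in> -K" using KA by auto
    then have "(\<lambda>y. P x y * g y) summable_on (-K)" using dg by blast
    then show ?thesis by (rule summable_on_subset_banach) (use KA in auto)
  qed
  have enn: "e y \<ge> 0" for y
    unfolding e_def using Pnn gnn KA by (intro infsum_nonneg mult_nonneg_nonneg) auto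
  have eh: "y \<in> A \<Longrightarrow> e y \<le> h y" for y unfolding e_def using eg by blast
  have g'A: "y \<in> -A \<Longrightarrow> g' y = g y" for y unfolding g'_def by auto
  have sA': "(\<lambda>y. P x y * g' y) summable_on (-A)" for x
    using sA[of x] by (rule summable_on_cong[THEN iffD1, rotated]) (simp add: g'A)
  have eA': "infsum (\<lambda>y. P x y * g' y) (-A) = e x" for x
    unfolding e_def by (rule infsum_cong) (simp add: g'A)
  have sK': "(\<lambda>y. P x y * g' y) summable_on (-K)" for x
  proof -
    have "(\<lambda>y. P x y * g' y) summable_on ((A - K) \<union> -A)"
      by (rule summable_on_Un_disjoint) (use finH sA' in auto)
    moreover have "-K = (A - K) \<union> -A" using KA by auto
    ultimately show ?thesis by simp
  qed
  have splitg': "infsum (\<lambda>y. P x y * g' y) (-K) = (\<Sum>y\<in>A - K. P x y * g' y) + e x" for x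
    using split_inf[OF sK'] eA' by simp
  have splitg: "infsum (\<lambda>y. P x y * g y) (-K) = (\<Sum>y\<in>A - K. P x y * g y) + e x" if "x \<in> -K" for x
    using split_inf[of x g] dg that unfolding e_def by blast
  have gH: "f x + (\<Sum>z\<in>A - K. P x z * g z) + e x \<le> g x" if x: "x \<in> A - K" for x
    using splitg[of x] dg x by force
  have g'le: "g' y \<le> g y" if y: "y \<in> A - K" for y
  proof -
    have "g' y = (\<Sum>u\<in>A - K. N y u * (f u + e u))" unfolding g'_def using y by simp
    also have "\<dots> \<le> (\<Sum>u\<in>A - K. N y u * (\<Sum>z\<in>A - K. (idm u z - P u z) * g z))"
    proof (intro sum_mono mult_left_mono)
      fix u assume u: "u \<in> A - K"
      have "(\<Sum>z\<in>A - K. (idm u z - P u z) * g z) = g u - (\<Sum>z\<in>A - K. P u z * g z)"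
        using sum_idm_left[OF finH u, where f=g] by (simp add: left_diff_distrib sum_subtractf)
      then show "f u + e u \<le> (\<Sum>z\<in>A - K. (idm u z - P u z) * g z)" using gH[OF u] by simp
      show "N y u \<ge> 0" using N_nn y u by blast
    qed
    also have "\<dots> = (\<Sum>z\<in>A - K. (\<Sum>u\<in>A - K. N y u * (idm u z - P u z)) * g z)"
      by (rule sum_swap_mult)
    also have "\<dots> = (\<Sum>z\<in>A - K. idm y z * g z)"
      using nmat_right y by (intro sum.cong refl) auto
    also have "\<dots> = g y" using sum_idm_left[OF finH y] by simp
    finally show ?thesis .
  qed
  have g'nn: "g' y \<ge> 0" if "y \<in> -K" for y
  proof (cases "y \<in> A - K")
    case True then show ?thesis unfolding g'_def using N_nn fnn enn
      by (auto intro!: sum_nonneg mult_nonneg_nonneg add_nonneg_nonneg)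
  next
    case False then show ?thesis unfolding g'_def using gnn that by auto
  qed
  have drift': "infsum (\<lambda>y. P x y * g' y) (-K) \<le> g' x - f x" if x: "x \<in> -K" for x
  proof (cases "x \<in> A - K")
    case True
    have "g' x - (\<Sum>z\<in>A - K. P x z * g' z) = (\<Sum>z\<in>A - K. (idm x z - P x z) * g' z)"
      using sum_idm_left[OF finH True, where f=g'] by (simp add: left_diff_distrib sum_subtractf)
    also have "\<dots> = (\<Sum>z\<in>A - K. (idm x z - P x z) * (\<Sum>u\<in>A - K. N z u * (f u + e u)))"
      unfolding g'_def by (intro sum.cong refl) auto
    also have "\<dots> = (\<Sum>u\<in>A - K. (\<Sum>z\<in>A - K. (idm x z - P x z) * N z u) * (f u + e u))"
      by (rule sum_swap_mult)
    also have "\<dots> = (\<Sum>u\<in>A - K. idm x u * (f u + e u))"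
      using nmat_left True by (intro sum.cong refl) auto
    also have "\<dots> = f x + e x" using sum_idm_left[OF finH True] by simp
    finally show ?thesis using splitg'[of x] by simp
  next
    case False
    then have xA: "x \<in> -A" using x by auto
    have "(\<Sum>y\<in>A - K. P x y * g' y) \<le> (\<Sum>y\<in>A - K. P x y * g y)"
      using g'le Pnn by (intro sum_mono mult_left_mono) auto
    then show ?thesis using splitg'[of x] splitg[OF x] dg x g'A[OF xA] by force
  qed
  have hb: "(\<lambda>y. \<pi> y * f y) summable_on (-K) \<and>
         infsum (\<lambda>y. \<pi> y * f y) (-K) \<le> (\<Sum>x\<in>- (-K). \<pi> x * infsum (\<lambda>y. P x y * g' y) (-K))"
    by (rule hard_bound[OF stoch stat]) (use finK fnn g'nn sK' drift' in auto)
  have bx: "infsum (\<lambda>y. P x y * g' y) (-K) \<le> p12N P K A f x + h x + p12N P K A h x" if x: "x \<in> K" for x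
  proof -
    have "(\<Sum>y\<in>A - K. P x y * g' y) = p12N P K A (\<lambda>u. f u + e u) x"
      unfolding p12N_eq g'_def by (intro sum.cong refl) auto
    also have "\<dots> \<le> p12N P K A (\<lambda>u. f u + h u) x"
      using eh by (intro p12N_mono) auto
    also have "\<dots> = p12N P K A f x + p12N P K A h x" by (rule p12N_add)
    finally show ?thesis using splitg'[of x] eh[of x] x KA by auto
  qed
  have pinn: "\<pi> x \<ge> 0" for x using stat_nonneg[OF stat] .
  have s: "(\<lambda>y. \<pi> y * f y) summable_on UNIV"
  proof -
    have "(\<lambda>y. \<pi> y * f y) summable_on (K \<union> -K)"
      by (rule summable_on_Un_disjoint) (use finK hb in auto)
    then show ?thesis by simp
  qed
  have "infsum (\<lambda>y. \<pi> y * f y) UNIV = infsum (\<lambda>y. \<pi> y * f y) (K \<union> -K)" by simp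
  also have "\<dots> = (\<Sum>y\<in>K. \<pi> y * f y) + infsum (\<lambda>y. \<pi> y * f y) (-K)"
    by (subst infsum_Un_disjoint) (use finK hb in auto)
  also have "\<dots> \<le> (\<Sum>y\<in>K. \<pi> y * f y) + (\<Sum>x\<in>K. \<pi> x * (p12N P K A f x + h x + p12N P K A h x))"
  proof -
    have "infsum (\<lambda>y. \<pi> y * f y) (-K) \<le> (\<Sum>x\<in>K. \<pi> x * infsum (\<lambda>y. P x y * g' y) (-K))"
      using hb by simp
    also have "\<dots> \<le> (\<Sum>x\<in>K. \<pi> x * (p12N P K A f x + h x + p12N P K A h x))"
      by (rule sum_mono, rule mult_left_mono) (use bx pinn in auto)
    finally show ?thesis by simp
  qed
  also have "\<dots> = (\<Sum>x\<in>K. \<pi> x * kappa_tilde P K A f h x)"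
    unfolding kappa_tilde_def kappa_low_def by (simp add: sum.distrib[symmetric] distrib_left add.assoc)
  finally show ?thesis using s by blast
qed

lemma piH:
  assumes stat: "stationary_dist P \<pi>" and u: "u \<in> A - K"
  shows "(\<Sum>x\<in>K. \<pi> x * (\<Sum>z\<in>A - K. P x z * N z u)) \<le> \<pi> u"
proof -
  define \<psi> where "\<psi> z = \<pi> z - (\<Sum>w\<in>A - K. \<pi> w * P w z)" for z
  have \<psi>ge: "(\<Sum>x\<in>K. \<pi> x * P x z) \<le> \<psi> z" for z
  proof -
    have "(\<Sum>x\<in>K \<union> (A - K). \<pi> x * P x z) \<le> \<pi> z" using station_sub[OF stat] finK finH by blast
    then show ?thesis unfolding \<psi>_def using finK finH by (subst (asm) sum.union_disjoint) auto
  qed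
  have rep: "(\<Sum>z\<in>A - K. \<psi> z * N z u) = \<pi> u"
  proof -
    have "(\<Sum>z\<in>A - K. \<psi> z * N z u) = (\<Sum>z\<in>A - K. \<pi> z * N z u) - (\<Sum>z\<in>A - K. (\<Sum>w\<in>A - K. \<pi> w * P w z) * N z u)"
      unfolding \<psi>_def by (simp add: left_diff_distrib sum_subtractf)
    also have "(\<Sum>z\<in>A - K. (\<Sum>w\<in>A - K. \<pi> w * P w z) * N z u) = (\<Sum>w\<in>A - K. \<pi> w * (\<Sum>z\<in>A - K. P w z * N z u))"
      by (rule sum_swap_mult[symmetric])
    also have "(\<Sum>z\<in>A - K. \<pi> z * N z u) - (\<Sum>w\<in>A - K. \<pi> w * (\<Sum>z\<in>A - K. P w z * N z u))
        = (\<Sum>w\<in>A - K. \<pi> w * (\<Sum>z\<in>A - K. (idm w z - P w z) * N z u))"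
    proof -
      have "(\<Sum>w\<in>A - K. \<pi> w * (\<Sum>z\<in>A - K. (idm w z - P w z) * N z u))
          = (\<Sum>w\<in>A - K. \<pi> w * (N w u - (\<Sum>z\<in>A - K. P w z * N z u)))"
      proof (intro sum.cong refl)
        fix w assume w: "w \<in> A - K"
        have "(\<Sum>z\<in>A - K. (idm w z - P w z) * N z u) = (\<Sum>z\<in>A - K. idm w z * N z u) - (\<Sum>z\<in>A - K. P w z * N z u)"
          by (simp add: left_diff_distrib sum_subtractf)
        then show "\<pi> w * (\<Sum>z\<in>A - K. (idm w z - P w z) * N z u) = \<pi> w * (N w u - (\<Sum>z\<in>A - K. P w z * N z u))"
          using sum_idm_left[OF finH w, where f="\<lambda>z. N z u"] by simp
      qed
      also have "\<dots> = (\<Sum>z\<in>A - K. \<pi> z * N z u) - (\<Sum>w\<in>A - K. \<pi> w * (\<Sum>z\<in>A - K. P w z * N z u))"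
        by (simp add: right_diff_distrib sum_subtractf)
      finally show ?thesis by simp
    qed
    also have "\<dots> = (\<Sum>w\<in>A - K. \<pi> w * idm w u)"
      using nmat_left u by (intro sum.cong refl) auto
    also have "\<dots> = \<pi> u" using sum_idm_right[OF finH u] by simp
    finally show ?thesis .
  qed
  have "(\<Sum>x\<in>K. \<pi> x * (\<Sum>z\<in>A - K. P x z * N z u)) = (\<Sum>z\<in>A - K. (\<Sum>x\<in>K. \<pi> x * P x z) * N z u)"
    by (rule sum_swap_mult)
  also have "\<dots> \<le> (\<Sum>z\<in>A - K. \<psi> z * N z u)"
    using \<psi>ge N_nn u by (intro sum_mono mult_right_mono) auto
  finally show ?thesis using rep by simp
qed

lemma easy_kappa:
  assumes stat: "stationary_dist P \<pi>" and fnn: "\<And>x. f x \<ge> 0"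
    and sf: "(\<lambda>y. \<pi> y * f y) summable_on UNIV"
  shows "(\<Sum>x\<in>K. \<pi> x * kappa_low P K A f x) \<le> infsum (\<lambda>y. \<pi> y * f y) UNIV"
proof -
  have pinn: "\<pi> x \<ge> 0" for x using stat_nonneg[OF stat] .
  have "(\<Sum>x\<in>K. \<pi> x * p12N P K A f x) = (\<Sum>x\<in>K. \<pi> x * (\<Sum>u\<in>A - K. (\<Sum>z\<in>A - K. P x z * N z u) * f u))"
    unfolding p12N_eq by (intro sum.cong refl arg_cong2[where f="(*)"] sum_swap_mult)
  also have "\<dots> = (\<Sum>u\<in>A - K. (\<Sum>x\<in>K. \<pi> x * (\<Sum>z\<in>A - K. P x z * N z u)) * f u)"
    by (rule sum_swap_mult)
  also have "\<dots> \<le> (\<Sum>u\<in>A - K. \<pi> u * f u)"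
    using piH[OF stat] fnn by (intro sum_mono mult_right_mono) auto
  finally have 1: "(\<Sum>x\<in>K. \<pi> x * p12N P K A f x) \<le> (\<Sum>u\<in>A - K. \<pi> u * f u)" .
  have "(\<Sum>x\<in>K. \<pi> x * kappa_low P K A f x) = (\<Sum>x\<in>K. \<pi> x * f x) + (\<Sum>x\<in>K. \<pi> x * p12N P K A f x)"
    unfolding kappa_low_def by (simp add: distrib_left sum.distrib)
  also have "\<dots> \<le> (\<Sum>x\<in>K. \<pi> x * f x) + (\<Sum>u\<in>A - K. \<pi> u * f u)" using 1 by simp
  also have "\<dots> = (\<Sum>x\<in>K \<union> (A - K). \<pi> x * f x)"
    using finK finH by (subst sum.union_disjoint) auto
  also have "\<dots> \<le> infsum (\<lambda>y. \<pi> y * f y) UNIV"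
    using finK finH sf pinn fnn by (intro finite_sum_le_infsum) auto
  finally show ?thesis .
qed

lemma phi_pi:
  assumes stat: "stationary_dist P \<pi>" and y: "y \<in> K"
  shows "(\<Sum>x\<in>K. \<pi> x * exit_G P K A x y) \<le> \<pi> y"
proof -
  have "(\<Sum>x\<in>K. \<pi> x * exit_G P K A x y)
      = (\<Sum>x\<in>K. \<pi> x * P x y) + (\<Sum>x\<in>K. \<pi> x * (\<Sum>w\<in>A - K. (\<Sum>z\<in>A - K. P x z * N z w) * P w y))"
    unfolding G_formula by (simp add: distrib_left sum.distrib sum_swap_mult)
  also have "(\<Sum>x\<in>K. \<pi> x * (\<Sum>w\<in>A - K. (\<Sum>z\<in>A - K. P x z * N z w) * P w y))
      = (\<Sum>w\<in>A - K. (\<Sum>x\<in>K. \<pi> x * (\<Sum>z\<in>A - K. P x z * N z w)) * P w y)"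
    by (rule sum_swap_mult)
  also have "\<dots> \<le> (\<Sum>w\<in>A - K. \<pi> w * P w y)"
    using piH[OF stat] Pnn by (intro sum_mono mult_right_mono) auto
  finally have "(\<Sum>x\<in>K. \<pi> x * exit_G P K A x y) \<le> (\<Sum>x\<in>K. \<pi> x * P x y) + (\<Sum>w\<in>A - K. \<pi> w * P w y)" by simp
  also have "\<dots> = (\<Sum>x\<in>K \<union> (A - K). \<pi> x * P x y)"
    using finK finH by (subst sum.union_disjoint) auto
  also have "\<dots> \<le> \<pi> y" using station_sub[OF stat] finK finH by blast
  finally show ?thesis .
qed

end



lemma ratio_lower:
  fixes W a m M :: real
  assumes "m \<ge> 0" "M > 0" "W * M \<ge> 1" "a \<ge> W * m"
  shows "m / M \<le> a"
proof -
  have "m \<le> m * (W * M)" using assms(1,3) by (metis mult_left_mono mult.right_neutral)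
  then have "m / M \<le> W * m" using assms(2) by (simp add: divide_le_eq algebra_simps)
  then show ?thesis using assms(4) by simp
qed

lemma ratio_upper:
  fixes W a m M :: real
  assumes "M \<ge> 0" "m > 0" "W * m \<le> 1" "a \<le> W * M"
  shows "a \<le> M / m"
proof -
  have "M * (W * m) \<le> M" using assms(1,3) by (metis mult_left_mono mult.right_neutral)
  then have "W * M \<le> M / m" using assms(2) by (simp add: le_divide_eq algebra_simps)
  then show ?thesis using assms(4) by simp
qed

theorem mainTheorem3:
  fixes P :: "'a::countable \<Rightarrow> 'a \<Rightarrow> real"
    and \<pi> r g1 g2 h1 h2 :: "'a \<Rightarrow> real"
    and K A :: "'a set"
  assumes stoch: "stochastic P"
    and irr: "irreducible_chain P"
    and posrec: "positive_recurrent P"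
    and stat: "stationary_dist P \<pi>"
    and finA: "finite A" and KA: "K \<subseteq> A" and Kne: "K \<noteq> {}"
    and Girr: "irreducible_on K (exit_G P K A)"
    and Gns: "nonsingular_on K (\<lambda>x y. idm x y - exit_G P K A x y)"
    and r_nonneg: "\<forall>x. r x \<ge> 0"
    and g_nonneg: "\<forall>x\<in>-K. g1 x \<ge> 0 \<and> g2 x \<ge> 0"
    and h_nonneg: "\<forall>x\<in>A. h1 x \<ge> 0 \<and> h2 x \<ge> 0"
    and drift1: "\<forall>x\<in>-K. (\<lambda>y. P x y * g1 y) summable_on (-K) \<and>
                        infsum (\<lambda>y. P x y * g1 y) (-K) \<le> g1 x - r x"
    and drift2: "\<forall>x\<in>-K. (\<lambda>y. P x y * g2 y) summable_on (-K) \<and>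
                        infsum (\<lambda>y. P x y * g2 y) (-K) \<le> g2 x - 1"
    and exit1: "\<forall>x\<in>A. (\<lambda>y. P x y * g1 y) summable_on (-A) \<and>
                        infsum (\<lambda>y. P x y * g1 y) (-A) \<le> h1 x"
    and exit2: "\<forall>x\<in>A. (\<lambda>y. P x y * g2 y) summable_on (-A) \<and>
                        infsum (\<lambda>y. P x y * g2 y) (-A) \<le> h2 x"
  shows "(\<lambda>x. \<pi> x * r x) summable_on UNIV \<and>
         lower_bound P K A r h2 \<le> infsum (\<lambda>x. \<pi> x * r x) UNIV \<and>
         infsum (\<lambda>x. \<pi> x * r x) UNIV \<le> upper_bound P K A r h1 \<and>
         (\<forall>\<pi>2. stationary_on K (P2 P K A) \<pi>2 \<longrightarrow>
            lower_bound P K A r h2 \<le> pi2_tilde P K A \<pi>2 r \<and>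
            pi2_tilde P K A \<pi>2 r \<le> upper_bound P K A r h1 \<and>
            \<bar>pi2_tilde P K A \<pi>2 r - infsum (\<lambda>x. \<pi> x * r x) UNIV\<bar>
              \<le> upper_bound P K A r h1 - lower_bound P K A r h2)"
proof -
  interpret mc P K A g2
    using stoch finA KA Kne g_nonneg drift2 by unfold_locales auto
  define M where "M = inv_on K (\<lambda>a b. idm a b - exit_G P K A a b)"
  have Minv: "is_inverse_on K (\<lambda>a b. idm a b - exit_G P K A a b) M"
    unfolding M_def by (rule inv_on_props[OF finK Gns])
  have Mnn: "M x y \<ge> 0" if "x \<in> K" "y \<in> K" for x y
    by (rule maxprinciple[OF finK Kne G_nn G_row Girr Minv]) (use that in auto)
  have Mdiag: "M x x \<ge> 1" if "x \<in> K" for x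
    by (rule inv_diag[OF finK G_nn _ Minv that]) (use Mnn in auto)
  have spos: "(\<Sum>w\<in>K. M x w) > 0" if x: "x \<in> K" for x
  proof -
    have "M x x \<le> (\<Sum>w\<in>K. M x w)" using finK x Mnn by (intro member_le_sum) auto
    then show ?thesis using Mdiag[OF x] by simp
  qed
  have tau_eq: "tau_dot P K A x q = (\<Sum>y\<in>K. M x y / (\<Sum>w\<in>K. M x w) * q y)" for x q
    unfolding tau_dot_def tau_def M_def Let_def by simp
  have T_mono: "tau_dot P K A x q \<le> tau_dot P K A x q'"
    if x: "x \<in> K" and le: "\<And>y. y \<in> K \<Longrightarrow> q y \<le> q' y" for x q q'
    unfolding tau_eq using le Mnn x spos[OF x]
    by (intro sum_mono mult_left_mono divide_nonneg_pos) auto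
  have T_const: "tau_dot P K A x (\<lambda>_. c) = c" if x: "x \<in> K" for x c
  proof -
    have "tau_dot P K A x (\<lambda>_. c) = (\<Sum>y\<in>K. M x y * (c / (\<Sum>w\<in>K. M x w)))"
      unfolding tau_eq by (intro sum.cong) auto
    also have "\<dots> = (\<Sum>y\<in>K. M x y) * (c / (\<Sum>w\<in>K. M x w))" by (rule sum_distrib_right[symmetric])
    finally have "tau_dot P K A x (\<lambda>_. c) = (\<Sum>y\<in>K. M x y) * (c / (\<Sum>w\<in>K. M x w))" .
    then show ?thesis using spos[OF x] by simp
  qed
  have T_lb: "c \<le> tau_dot P K A x q" if "x \<in> K" "\<And>y. y \<in> K \<Longrightarrow> c \<le> q y" for x q c
    using T_mono[of x "\<lambda>_. c" q] T_const that by auto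
  define kl where "kl = kappa_low P K A r"
  define kt1 where "kt1 = kappa_tilde P K A r h1"
  define kle where "kle = kappa_low P K A (\<lambda>_. 1)"
  define kt2 where "kt2 = kappa_tilde P K A (\<lambda>_. 1) h2"
  have Hsub: "A - K \<subseteq> A" by auto
  have kl_nn: "kl x \<ge> 0" for x
    unfolding kl_def kappa_low_def using r_nonneg p12N_nn[of r x] by auto
  have kl_kt1: "kl x \<le> kt1 x" if "x \<in> K" for x
    unfolding kl_def kt1_def kappa_tilde_def using h_nonneg p12N_nn[of h1 x] that KA by auto
  have kle_1: "kle x \<ge> 1" for x
    unfolding kle_def kappa_low_def using p12N_nn[of "\<lambda>_. 1" x] by auto
  have kle_kt2: "kle x \<le> kt2 x" if "x \<in> K" for x
    unfolding kle_def kt2_def kappa_tilde_def using h_nonneg p12N_nn[of h2 x] that KA by auto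
  define Lmin where "Lmin = Min ((\<lambda>x. tau_dot P K A x kl) ` K)"
  define Lmax where "Lmax = Max ((\<lambda>x. tau_dot P K A x kt2) ` K)"
  define Umax where "Umax = Max ((\<lambda>x. tau_dot P K A x kt1) ` K)"
  define Umin where "Umin = Min ((\<lambda>x. tau_dot P K A x kle) ` K)"
  have LB: "lower_bound P K A r h2 = Lmin / Lmax"
    unfolding lower_bound_def Lmin_def Lmax_def kl_def kt2_def ..
  have UB: "upper_bound P K A r h1 = Umax / Umin"
    unfolding upper_bound_def Umax_def Umin_def kt1_def kle_def ..
  obtain x0 where x0: "x0 \<in> K" using Kne by blast
  have Lmin_nn: "Lmin \<ge> 0" unfolding Lmin_def using finK Kne T_lb kl_nn by (subst Min_ge_iff) auto
  have Umin_1: "Umin \<ge> 1" unfolding Umin_def using finK Kne T_lb kle_1 by (subst Min_ge_iff) auto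
  have Lmax_1: "Lmax \<ge> 1"
  proof -
    have "1 \<le> tau_dot P K A x0 kt2" using T_lb[OF x0, of 1 kt2] kle_1 kle_kt2 by (meson order.trans)
    also have "\<dots> \<le> Lmax" unfolding Lmax_def using finK x0 by (intro Max_ge) auto
    finally show ?thesis .
  qed
  have Umax_nn: "Umax \<ge> 0"
  proof -
    have "0 \<le> tau_dot P K A x0 kt1" using T_lb[OF x0, of 0 kt1] kl_nn kl_kt1 by (meson order.trans)
    also have "\<dots> \<le> Umax" unfolding Umax_def using finK x0 by (intro Max_ge) auto
    finally show ?thesis .
  qed
  have gen: "\<exists>W. W = (\<Sum>x\<in>K. \<phi> x) \<and>
      W * Lmin \<le> (\<Sum>y\<in>K. \<phi> y * kl y) \<and> (\<Sum>y\<in>K. \<phi> y * kt2 y) \<le> W * Lmax \<and>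
      (\<Sum>y\<in>K. \<phi> y * kt1 y) \<le> W * Umax \<and> W * Umin \<le> (\<Sum>y\<in>K. \<phi> y * kle y)"
    if phi: "\<And>y. y \<in> K \<Longrightarrow> (\<Sum>x\<in>K. \<phi> x * exit_G P K A x y) \<le> \<phi> y" for \<phi>
  proof -
    obtain \<omega> where \<omega>nn: "\<forall>x\<in>K. \<omega> x \<ge> 0"
      and rep: "\<And>q. (\<Sum>y\<in>K. \<phi> y * q y) = (\<Sum>x\<in>K. \<omega> x * (\<Sum>y\<in>K. M x y / (\<Sum>w\<in>K. M x w) * q y))"
      using decomp[OF finK Minv spos phi] by blast
    have rep': "(\<Sum>y\<in>K. \<phi> y * q y) = (\<Sum>x\<in>K. \<omega> x * tau_dot P K A x q)" for q
      unfolding tau_eq by (rule rep)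
    have W: "(\<Sum>x\<in>K. \<omega> x) = (\<Sum>x\<in>K. \<phi> x)"
      using rep'[of "\<lambda>_. 1"] T_const by simp
    note wb = wsum_bounds[OF finK, of \<omega>] 
    show ?thesis
      unfolding W[symmetric] Lmin_def Lmax_def Umax_def Umin_def rep'
      using wb \<omega>nn by auto
  qed
  have pinn: "\<pi> x \<ge> 0" for x using stat_nonneg[OF stat] .
  have hk1: "(\<lambda>y. \<pi> y * r y) summable_on UNIV \<and>
         infsum (\<lambda>y. \<pi> y * r y) UNIV \<le> (\<Sum>x\<in>K. \<pi> x * kt1 x)"
    unfolding kt1_def
    by (rule hard_kappa[OF stat]) (use r_nonneg g_nonneg h_nonneg drift1 exit1 in auto)
  have hk2: "(\<lambda>y. \<pi> y * 1) summable_on UNIV \<and>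
         infsum (\<lambda>y. \<pi> y * 1) UNIV \<le> (\<Sum>x\<in>K. \<pi> x * kt2 x)"
    unfolding kt2_def
    by (rule hard_kappa[OF stat]) (use g_nonneg h_nonneg drift2 exit2 in auto)
  have one: "infsum (\<lambda>y. \<pi> y * 1) UNIV = 1"
    using stat unfolding stationary_dist_def by (simp add: infsumI)
  have ek1: "(\<Sum>x\<in>K. \<pi> x * kl x) \<le> infsum (\<lambda>y. \<pi> y * r y) UNIV"
    unfolding kl_def using easy_kappa[OF stat] r_nonneg hk1 by blast
  have ek2: "(\<Sum>x\<in>K. \<pi> x * kle x) \<le> 1"
    unfolding kle_def using easy_kappa[OF stat, of "\<lambda>_. 1"] hk2 one by simp
  obtain W where W: "W * Lmin \<le> (\<Sum>y\<in>K. \<pi> y * kl y)" "(\<Sum>y\<in>K. \<pi> y * kt2 y) \<le> W * Lmax"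
      "(\<Sum>y\<in>K. \<pi> y * kt1 y) \<le> W * Umax" "W * Umin \<le> (\<Sum>y\<in>K. \<pi> y * kle y)"
    using gen[of \<pi>] phi_pi[OF stat] by blast
  define pr where "pr = infsum (\<lambda>x. \<pi> x * r x) UNIV"
  have low: "Lmin / Lmax \<le> pr"
    by (rule ratio_lower[where W=W]) (use Lmin_nn Lmax_1 W hk2 one ek1 pr_def in auto)
  have up: "pr \<le> Umax / Umin"
    by (rule ratio_upper[where W=W]) (use Umax_nn Umin_1 W hk1 ek2 pr_def in auto)
  have part2: "lower_bound P K A r h2 \<le> pi2_tilde P K A \<mu> r \<and>
            pi2_tilde P K A \<mu> r \<le> upper_bound P K A r h1"
    if st: "stationary_on K (P2 P K A) \<mu>" for \<mu>
  proof -
    have \<mu>nn: "\<mu> x \<ge> 0" if "x \<in> K" for x using st that unfolding stationary_on_def by blast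
    have \<mu>1: "(\<Sum>x\<in>K. \<mu> x) = 1" using st unfolding stationary_on_def by blast
    have phi: "(\<Sum>x\<in>K. \<mu> x * exit_G P K A x y) \<le> \<mu> y" if y: "y \<in> K" for y
    proof -
      have "(\<Sum>x\<in>K. \<mu> x * exit_G P K A x y) \<le> (\<Sum>x\<in>K. \<mu> x * P2 P K A x y)"
      proof (intro sum_mono mult_left_mono)
        fix x assume x: "x \<in> K"
        show "\<mu> x \<ge> 0" using \<mu>nn x .
        define d where "d = (\<Sum>y'\<in>K. exit_G P K A x y')"
        have d1: "d \<le> 1" unfolding d_def using G_row x .
        have Gnn': "exit_G P K A x y \<ge> 0" using G_nn x y .
        show "exit_G P K A x y \<le> P2 P K A x y"
        proof (cases "d = 0")
          case True
          have "exit_G P K A x y = 0"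
            using True sum_nonneg_eq_0_iff[OF finK, of "exit_G P K A x"] G_nn x y unfolding d_def by auto
          then show ?thesis unfolding P2_def by simp
        next
          case False
          have "d \<ge> 0" unfolding d_def using G_nn x by (intro sum_nonneg) auto
          then have dpos: "d > 0" using False by simp
          have "exit_G P K A x y * d \<le> exit_G P K A x y" using d1 Gnn' by (simp add: mult_left_le)
          then show ?thesis unfolding P2_def d_def[symmetric] using dpos by (simp add: le_divide_eq)
        qed
      qed
      also have "\<dots> = \<mu> y" using st y unfolding stationary_on_def by blast
      finally show ?thesis .
    qed
    obtain W2 where W2: "W2 = 1" "W2 * Lmin \<le> (\<Sum>y\<in>K. \<mu> y * kl y)" "(\<Sum>y\<in>K. \<mu> y * kt2 y) \<le> W2 * Lmax"
      "(\<Sum>y\<in>K. \<mu> y * kt1 y) \<le> W2 * Umax" "W2 * Umin \<le> (\<Sum>y\<in>K. \<mu> y * kle y)"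
      using gen[of \<mu>] phi \<mu>1 by blast
    define a where "a = (\<Sum>y\<in>K. \<mu> y * kl y)"
    define b where "b = (\<Sum>y\<in>K. \<mu> y * kle y)"
    have a1: "Lmin \<le> a" using W2 unfolding a_def by simp
    have a2: "a \<le> Umax"
    proof -
      have "a \<le> (\<Sum>y\<in>K. \<mu> y * kt1 y)" unfolding a_def using \<mu>nn kl_kt1 by (intro sum_mono mult_left_mono) auto
      then show ?thesis using W2 by simp
    qed
    have b1: "Umin \<le> b" using W2 unfolding b_def by simp
    have b2: "b \<le> Lmax"
    proof -
      have "b \<le> (\<Sum>y\<in>K. \<mu> y * kt2 y)" unfolding b_def using \<mu>nn kle_kt2 by (intro sum_mono mult_left_mono) auto
      then show ?thesis using W2 by simp
    qed
    have bpos: "b > 0" using b1 Umin_1 by simp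
    have pt: "pi2_tilde P K A \<mu> r = a / b" unfolding pi2_tilde_def a_def b_def kl_def kle_def ..
    have "Lmin / Lmax \<le> Lmin / b" using Lmin_nn bpos b2 by (intro divide_left_mono) auto
    also have "\<dots> \<le> a / b" using a1 bpos by (intro divide_right_mono) auto
    finally have l: "Lmin / Lmax \<le> a / b" .
    have "a / b \<le> Umax / b" using a2 bpos by (intro divide_right_mono) auto
    also have "\<dots> \<le> Umax / Umin" using Umax_nn Umin_1 b1 by (intro divide_left_mono) auto
    finally have u: "a / b \<le> Umax / Umin" .
    show ?thesis using l u pt LB UB by simp
  qed
  show ?thesis
  proof (intro conjI allI impI)
    show "(\<lambda>x. \<pi> x * r x) summable_on UNIV" using hk1 by blast
    show "lower_bound P K A r h2 \<le> infsum (\<lambda>x. \<pi> x * r x) UNIV" using low LB pr_def by simp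
    show "infsum (\<lambda>x. \<pi> x * r x) UNIV \<le> upper_bound P K A r h1" using up UB pr_def by simp
    fix \<mu> assume st: "stationary_on K (P2 P K A) \<mu>"
    show "lower_bound P K A r h2 \<le> pi2_tilde P K A \<mu> r" using part2[OF st] by blast
    show "pi2_tilde P K A \<mu> r \<le> upper_bound P K A r h1" using part2[OF st] by blast
    show "\<bar>pi2_tilde P K A \<mu> r - infsum (\<lambda>x. \<pi> x * r x) UNIV\<bar>
              \<le> upper_bound P K A r h1 - lower_bound P K A r h2"
      using part2[OF st] low up LB UB pr_def by (simp add: abs_le_iff)
  qed
qed


end
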